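(* Let $f:\{0,1\}^n\to\{0,1\}$ and let $\ell$ be a positive integer. The fraction of vertices of $\{0,1\}^n$ that are non-$\ell$-sticky (with respect to $f$) is at most $\frac{2\ell\cdot\mathbf{I}(f)}{n}$.
   Context: $H_n$ is the undirected hypercube graph on $\{0,1\}^n$ (edges between points at Hamming distance $1$); a random walk step moves to a uniformly random neighbor. An edge $(x,y)$ is influential if $f(x)\ne f(y)$. The total influence is $\mathbf{I}(f)=n\cdot\Pr[f(x)\neq f(y)]$ for a uniformly random edge $(x,y)$ of $H_n$. A vertex $x$ is $\ell$-sticky if an $\ell$-step random walk on $H_n$ starting from $x$ traverses no influential edge with probability at least $1/2$; otherwise $x$ is non-$\ell$-sticky. *)

theory Defs
  imports Main Complex_Main
begin

definition cube :: "nat \<Rightarrow> bool list set" where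
  "cube n = {x. length x = n}"

definition flip :: "nat \<Rightarrow> bool list \<Rightarrow> bool list" where
  "flip i x = x[i := \<not> x ! i]"

definition hedges :: "nat \<Rightarrow> bool list set set" where
  "hedges n = {{x, flip i x} | x i. x \<in> cube n \<and> i < n}"

definition influential :: "(bool list \<Rightarrow> bool) \<Rightarrow> bool list set \<Rightarrow> bool" where
  "influential f e \<longleftrightarrow> (\<exists>x y. e = {x, y} \<and> f x \<noteq> f y)"

definition total_influence :: "nat \<Rightarrow> (bool list \<Rightarrow> bool) \<Rightarrow> real" where
  "total_influence n f =
     real n * (real (card {e \<in> hedges n. influential f e}) / real (card (hedges n)))"

fun no_infl :: "(bool list \<Rightarrow> bool) \<Rightarrow> bool list \<Rightarrow> nat list \<Rightarrow> bool" where
  "no_infl f x [] = True"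
| "no_infl f x (i # is) = (f x = f (flip i x) \<and> no_infl f (flip i x) is)"

text \<open>An l-step random walk = uniformly random sequence of l coordinates in {0..<n}.\<close>
definition walks :: "nat \<Rightarrow> nat \<Rightarrow> nat list set" where
  "walks n l = {is. length is = l \<and> set is \<subseteq> {..<n}}"

definition stay_prob :: "nat \<Rightarrow> (bool list \<Rightarrow> bool) \<Rightarrow> nat \<Rightarrow> bool list \<Rightarrow> real" where
  "stay_prob n f l x =
     real (card {is \<in> walks n l. no_infl f x is}) / real (card (walks n l))"

definition sticky :: "nat \<Rightarrow> (bool list \<Rightarrow> bool) \<Rightarrow> nat \<Rightarrow> bool list \<Rightarrow> bool" where
  "sticky n f l x \<longleftrightarrow> stay_prob n f l x \<ge> 1/2"

end

theory Submission
  imports Defs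
begin

lemma len_flip[simp]: "length (flip i x) = length x" by (simp add: flip_def)
lemma flip_flip[simp]: "flip i (flip i x) = x" by (cases "i < length x") (simp_all add: flip_def list_update_beyond)
lemma flip_neq: "i < length x \<Longrightarrow> flip i x \<noteq> x"
  by (simp add: flip_def list_eq_iff_nth_eq) (metis nth_list_update_eq)
lemma flip_inj2: "i < length x \<Longrightarrow> j < length x \<Longrightarrow> flip i x = flip j x \<Longrightarrow> i = j"
  unfolding flip_def by (metis (full_types) nth_list_update_eq nth_list_update_neq)
lemma flip_cube[simp]: "flip i x \<in> cube n \<longleftrightarrow> x \<in> cube n" by (simp add: cube_def)

lemma fin_cube: "finite (cube n)"
proof -
  have "cube n = {xs. set xs \<subseteq> (UNIV::bool set) \<and> length xs = n}" by (auto simp: cube_def)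
  thus ?thesis using finite_lists_length_eq[of "UNIV::bool set" n] by simp
qed
lemma card_cube: "card (cube n) = 2 ^ n"
proof -
  have "cube n = {xs. set xs \<subseteq> (UNIV::bool set) \<and> length xs = n}" by (auto simp: cube_def)
  thus ?thesis using card_lists_length_eq[of "UNIV::bool set" n] by simp
qed
lemma fin_walks: "finite (walks n l)"
  unfolding walks_def using finite_lists_length_eq[of "{..<n}" l] by (simp add: conj_commute)
lemma card_walks: "card (walks n l) = n ^ l"
  unfolding walks_def using card_lists_length_eq[of "{..<n}" l] by (simp add: conj_commute)

lemma walks_Suc: "walks n (Suc l) = (\<lambda>(i,is). i # is) ` ({..<n} \<times> walks n l)"
  unfolding walks_def by (auto simp: length_Suc_conv image_iff)

definition hh :: "bool list \<times> nat \<Rightarrow> bool list set" where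
  "hh p = {fst p, flip (snd p) (fst p)}"
definition sg :: "bool list \<times> nat \<Rightarrow> bool list \<times> nat" where
  "sg p = (flip (snd p) (fst p), snd p)"

lemma hh_eq:
  assumes "length x = n" "length y = n" "i < n" "j < n" "hh (x,i) = hh (y,j)"
  shows "(y,j) = (x,i) \<or> (y,j) = sg (x,i)"
proof -
  have e: "{x, flip i x} = {y, flip j y}" using assms(5) by (simp add: hh_def)
  show ?thesis
  proof (cases "x = y")
    case True
    then have "flip i x = flip j x" using e flip_neq[of i x] flip_neq[of j x] assms
      by (metis doubleton_eq_iff)
    then show ?thesis using True flip_inj2 assms by auto
  next
    case False
    then have "x = flip j y" "y = flip i x" using e by (auto simp: doubleton_eq_iff)
    then have "flip i x = flip j x" by (metis flip_flip)
    then have "i = j" using flip_inj2 assms by auto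
    then show ?thesis using \<open>y = flip i x\<close> by (simp add: sg_def)
  qed
qed

lemma two_to_one:
  assumes S: "S \<subseteq> cube n \<times> {..<n}" and cl: "\<And>p. p \<in> S \<Longrightarrow> sg p \<in> S"
  shows "card S = 2 * card (hh ` S)"
proof -
  have fS: "finite S" using S fin_cube finite_subset by blast
  have "card S = (\<Sum>e\<in>hh ` S. card {p\<in>S. hh p = e})"
    using sum.image_gen[OF fS, of "\<lambda>_. 1::nat" hh] by simp
  also have "\<dots> = (\<Sum>e\<in>hh ` S. 2)"
  proof (rule sum.cong[OF refl])
    fix e assume "e \<in> hh ` S"
    then obtain x i where xi: "(x,i) \<in> S" "e = hh (x,i)" by auto
    have lx: "length x = n" "i < n" using xi S by (auto simp: cube_def)
    have "{p\<in>S. hh p = e} = {(x,i), sg (x,i)}"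
    proof
      show "{p\<in>S. hh p = e} \<subseteq> {(x,i), sg (x,i)}"
      proof
        fix p assume p: "p \<in> {p\<in>S. hh p = e}"
        obtain y j where pj: "p = (y,j)" by (cases p)
        have "length y = n" "j < n" using p pj S by (auto simp: cube_def)
        then show "p \<in> {(x,i), sg (x,i)}" using hh_eq[of x n y i j] lx p pj xi by auto
      qed
      show "{(x,i), sg (x,i)} \<subseteq> {p\<in>S. hh p = e}"
        using xi cl by (auto simp: hh_def sg_def insert_commute)
    qed
    moreover have "(x,i) \<noteq> sg (x,i)" using flip_neq[of i x] lx by (auto simp: sg_def)
    ultimately show "card {p\<in>S. hh p = e} = 2" by simp
  qed
  finally show ?thesis by simp
qed

definition bad :: "nat \<Rightarrow> (bool list \<Rightarrow> bool) \<Rightarrow> nat \<Rightarrow> bool list \<Rightarrow> nat" where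
  "bad n f l x = card {is \<in> walks n l. \<not> no_infl f x is}"
definition dc :: "nat \<Rightarrow> (bool list \<Rightarrow> bool) \<Rightarrow> bool list \<Rightarrow> nat" where
  "dc n f x = card {i \<in> {..<n}. f x \<noteq> f (flip i x)}"
definition DD :: "nat \<Rightarrow> (bool list \<Rightarrow> bool) \<Rightarrow> nat" where
  "DD n f = (\<Sum>x\<in>cube n. dc n f x)"

lemma bad_Suc: "bad n f (Suc l) x \<le> dc n f x * n ^ l + (\<Sum>i<n. bad n f l (flip i x))"
proof -
  let ?c = "\<lambda>(i::nat,is). i # is"
  let ?A = "{i \<in> {..<n}. f x \<noteq> f (flip i x)} \<times> walks n l"
  let ?B = "Sigma {..<n} (\<lambda>i. {is \<in> walks n l. \<not> no_infl f (flip i x) is})"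
  have sub: "{is \<in> walks n (Suc l). \<not> no_infl f x is} \<subseteq> ?c ` ?A \<union> ?c ` ?B"
    unfolding walks_Suc by auto
  have fA: "finite ?A" using fin_walks by auto
  have fB: "finite ?B" using fin_walks by auto
  have "bad n f (Suc l) x \<le> card (?c ` ?A \<union> ?c ` ?B)"
    unfolding bad_def using sub fA fB by (intro card_mono) auto
  also have "\<dots> \<le> card (?c ` ?A) + card (?c ` ?B)" by (rule card_Un_le)
  also have "\<dots> \<le> card ?A + card ?B" by (intro add_mono card_image_le fA fB)
  also have "card ?A = dc n f x * n ^ l" by (simp add: card_cartesian_product dc_def card_walks)
  also have "card ?B = (\<Sum>i<n. bad n f l (flip i x))"
    using fin_walks by (simp add: card_SigmaI bad_def)
  finally show ?thesis .
qed

lemma sum_flip: "i < n \<Longrightarrow> (\<Sum>x\<in>cube n. g (flip i x)) = (\<Sum>x\<in>cube n. g x)"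
  by (rule sum.reindex_bij_witness[of _ "flip i" "flip i"]) auto

lemma N_bound: "n * (\<Sum>x\<in>cube n. bad n f l x) \<le> l * n ^ l * DD n f"
proof (induction l)
  case 0
  have "bad n f 0 x = 0" for x unfolding bad_def walks_def by auto
  then show ?case by simp
next
  case (Suc l)
  have "(\<Sum>x\<in>cube n. bad n f (Suc l) x) \<le> (\<Sum>x\<in>cube n. dc n f x * n ^ l + (\<Sum>i<n. bad n f l (flip i x)))"
    by (intro sum_mono bad_Suc)
  also have "\<dots> = DD n f * n ^ l + (\<Sum>i<n. \<Sum>x\<in>cube n. bad n f l (flip i x))"
    by (simp add: sum.distrib DD_def sum_distrib_right sum.swap[of _ "cube n"])
  also have "(\<Sum>i<n. \<Sum>x\<in>cube n. bad n f l (flip i x)) = (\<Sum>i<n. \<Sum>x\<in>cube n. bad n f l x)"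
    by (intro sum.cong refl sum_flip) auto
  also have "\<dots> = n * (\<Sum>x\<in>cube n. bad n f l x)" by simp
  finally have "n * (\<Sum>x\<in>cube n. bad n f (Suc l) x) \<le> n * (DD n f * n ^ l + n * (\<Sum>x\<in>cube n. bad n f l x))"
    by simp
  also have "\<dots> \<le> n * (DD n f * n ^ l) + n * (l * n ^ l * DD n f)"
    using Suc.IH by (simp add: algebra_simps)
  also have "\<dots> = Suc l * n ^ Suc l * DD n f" by (simp add: algebra_simps)
  finally show ?case .
qed

lemma hedges_eq: "hedges n = hh ` (cube n \<times> {..<n})"
  unfolding hedges_def hh_def by (auto simp: image_iff; blast)

lemma infl_eq: "{e \<in> hedges n. influential f e} = hh ` Sigma (cube n) (\<lambda>x. {i \<in> {..<n}. f x \<noteq> f (flip i x)})"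
  unfolding hedges_eq hh_def influential_def by (auto simp: doubleton_eq_iff image_iff) blast+

lemma total_infl: "n \<ge> 1 \<Longrightarrow> total_influence n f = real (DD n f) / 2 ^ n"
proof -
  assume n: "n \<ge> 1"
  have c1: "card (cube n \<times> {..<n}) = 2 * card (hedges n)"
    unfolding hedges_eq by (rule two_to_one) (auto simp: sg_def)
  have c2: "card (Sigma (cube n) (\<lambda>x. {i \<in> {..<n}. f x \<noteq> f (flip i x)})) = 2 * card {e \<in> hedges n. influential f e}"
    unfolding infl_eq by (rule two_to_one) (auto simp: sg_def)
  have c3: "card (Sigma (cube n) (\<lambda>x. {i \<in> {..<n}. f x \<noteq> f (flip i x)})) = DD n f"
    using fin_cube by (simp add: card_SigmaI DD_def dc_def)
  have c4: "card (cube n \<times> {..<n}) = 2 ^ n * n" by (simp add: card_cartesian_product card_cube)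
  have h: "real (card (hedges n)) = 2 ^ n * real n / 2" using c1 c4
    by (metis (mono_tags, lifting) nonzero_mult_div_cancel_left of_nat_mult of_nat_numeral of_nat_power zero_neq_numeral)
  have a: "real (card {e \<in> hedges n. influential f e}) = DD n f / 2" using c2 c3 by simp
  have np: "real n > 0" using n by simp
  show ?thesis unfolding total_influence_def h a using np by (simp add: field_simps)
qed

lemma nonsticky_bad:
  assumes "\<not> sticky n f l x"
  shows "real (n ^ l) \<le> 2 * real (bad n f l x)"
proof -
  let ?G = "{is \<in> walks n l. no_infl f x is}"
  let ?B = "{is \<in> walks n l. \<not> no_infl f x is}"
  have "card ?G + card ?B = card (walks n l)"
  proof -
    have "walks n l = ?G \<union> ?B" by auto
    moreover have "finite ?G" "finite ?B" "?G \<inter> ?B = {}" using fin_walks by auto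
    ultimately show ?thesis using card_Un_disjoint[of ?G ?B] by simp
  qed
  hence e: "card ?G + bad n f l x = n ^ l" by (simp add: bad_def card_walks)
  have "real (card ?G) / real (n ^ l) < 1/2" using assms unfolding sticky_def stay_prob_def card_walks by simp
  show ?thesis
  proof (cases "n ^ l = 0")
    case True then show ?thesis by (simp del: power_eq_0_iff)
  next
    case False
    hence "real (card ?G) * 2 < real (n ^ l)" using \<open>real (card ?G) / real (n ^ l) < 1/2\<close>
      by (simp add: field_simps)
    moreover have "real (card ?G) + real (bad n f l x) = real (n ^ l)" using e by (metis of_nat_add)
    ultimately show ?thesis by linarith
  qed
qed

theorem lemma3p4:
  fixes n l :: nat and f :: "bool list \<Rightarrow> bool"
  assumes "n \<ge> 1" and "l \<ge> 1"
  shows "real (card {x \<in> cube n. \<not> sticky n f l x}) / real (card (cube n))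
           \<le> 2 * real l * total_influence n f / real n"
proof -
  let ?K = "{x \<in> cube n. \<not> sticky n f l x}"
  have fK: "finite ?K" using fin_cube by simp
  have "real (card ?K) * real (n ^ l) = (\<Sum>x\<in>?K. real (n ^ l))" by simp
  also have "\<dots> \<le> (\<Sum>x\<in>?K. 2 * real (bad n f l x))"
    by (intro sum_mono nonsticky_bad) auto
  also have "\<dots> \<le> (\<Sum>x\<in>cube n. 2 * real (bad n f l x))"
    by (intro sum_mono2 fin_cube) auto
  also have "\<dots> = 2 * real (\<Sum>x\<in>cube n. bad n f l x)"
    by (simp add: sum_distrib_left)
  finally have i1: "real (card ?K) * real (n ^ l) \<le> 2 * real (\<Sum>x\<in>cube n. bad n f l x)" .
  have i2: "real n * real (\<Sum>x\<in>cube n. bad n f l x) \<le> real l * real (n ^ l) * real (DD n f)"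
    using N_bound[of n f l] by (metis of_nat_le_iff of_nat_mult)
  have np: "real n > 0" "real (n ^ l) > 0" using assms by auto
  have "real n * (real (card ?K) * real (n ^ l)) \<le> real n * (2 * real (\<Sum>x\<in>cube n. bad n f l x))"
    using i1 np by simp
  also have "\<dots> \<le> 2 * (real l * real (n ^ l) * real (DD n f))" using i2 by simp
  finally have "real (n ^ l) * (real n * real (card ?K)) \<le> real (n ^ l) * (2 * real l * real (DD n f))"
    by (simp add: algebra_simps)
  hence i3: "real n * real (card ?K) \<le> 2 * real l * real (DD n f)"
    using np(2) by (simp add: mult_le_cancel_left_pos)
  show ?thesis unfolding total_infl[OF assms(1)] card_cube using i3 np(1)
    by (simp add: field_simps)
qed

end
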